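(* In any execution of Algorithm $\gamma$n-Burst, within any time interval $I^+$ during which at all times at least $n^2$ tasks of cost $\ell_{\max}$ are pending in $\gamma$n-Burst, each $\ell_{\max}$-task has at most one absolute task execution fully contained in $I^+$ (all such absolute task executions appear exactly once).
   Context: Model: $n$ processors with ids $1,\dots,n$ and a shared repository; tasks with ids, arrival times and costs $\ell_{\min}$ or $\ell_{\max}$ ($0<\ell_{\min}<\ell_{\max}$) are injected over time; processors may crash and restart (restarted processors remember only the algorithm and $n$). A task is pending if injected and its completion not yet reported; once reported it is immediately removed. A processor repeatedly obtains the pending set, chooses a task, executes it (a task of cost $\ell$ takes time $\ell/s$ with speedup $s>1$) and reports it; execution is non-preemptive and a crash loses progress. An absolute task execution of $\tau$ is an interval $[t,t']$ in which a processor schedules $\tau$ at $t$ and reports it at $t'$ without stopping in $[t,t')$. Algorithm $\gamma$n-Burst for processor $p$, with $\gamma=\lceil\frac{\ell_{\max}-s\ell_{\min}}{(s-1)\ell_{\min}}\rceil$: counter $c$ set to $0$ on (re)start; each cycle it forms lists $L_{\min},L_{\max}$ of pending tasks of cost $\ell_{\min},\ell_{\max}$ sorted by arrival. Case 1 (both lists $<n^2$): if previous task had cost $\ell_{\min}$, perform task at position $(pn)\bmod|L_{\max}|$ of $L_{\max}$, $c\gets0$; else task at position $(pn)\bmod|L_{\min}|$ of $L_{\min}$, $c\gets\min(c+1,\gamma)$. Case 2 ($|L_{\min}|\ge n^2>|L_{\max}|$): position $pn$ of $L_{\min}$, $c\gets\min(c+1,\gamma)$. Case 3 ($|L_{\max}|\ge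 n^2>|L_{\min}|$): position $pn$ of $L_{\max}$, $c\gets0$. Case 4 (both $\ge n^2$): if $c=\gamma$, position $pn$ of $L_{\max}$, $c\gets0$; else position $pn$ of $L_{\min}$, $c\gets\min(c+1,\gamma)$. Then report the task. *)

theory Defs
  imports Complex_Main
begin

text \<open>Tasks are identified by natural numbers; a task set is described by the set
  Inj of injected tasks, their arrival (= injection) times arr and their costs cst.  The behaviour of processor p is a (possibly finite)
  timed sequence of steps  run p k = Some (t, a)  (time t, action a).\<close>

datatype act = Restart | Sched nat | Report nat | Poll | Crash

definition sorted_by_arrival :: "(nat \<Rightarrow> real) \<Rightarrow> nat set \<Rightarrow> nat list" where
  "sorted_by_arrival arr S =
     (THE xs. set xs = S \<and> sorted_wrt (\<lambda>x y. arr x < arr y \<or> (arr x = arr y \<and> x < y)) xs)"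

text \<open>Element at (1-based, cyclic) position j of a list: position j is the j-th element,
  positions are taken modulo the length of the list.\<close>
definition pick :: "nat \<Rightarrow> nat list \<Rightarrow> nat" where
  "pick j xs = xs ! ((j - 1) mod length xs)"

definition burst_gamma :: "real \<Rightarrow> real \<Rightarrow> real \<Rightarrow> int" where
  "burst_gamma lmin lmax s = \<lceil>(lmax - s * lmin) / ((s - 1) * lmin)\<rceil>"

text \<open>One cycle of gamma n-Burst for processor p with local state (prev, c), where prev is
  the cost of the previously performed task (None after a (re)start) and c the counter,
  given the lists Lmin, Lmax.\<close>
definition burst_choice ::
  "nat \<Rightarrow> real \<Rightarrow> real \<Rightarrow> real \<Rightarrow> nat \<Rightarrow> real option \<Rightarrow> int \<Rightarrow> nat list \<Rightarrow> nat list
   \<Rightarrow> (nat \<times> int) option" where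
  "burst_choice n lmin lmax s p prev c Lmin Lmax =
    (let g = burst_gamma lmin lmax s; N = n^2; j = p * n;
         takeMax = Some (pick j Lmax, 0::int);
         takeMin = Some (pick j Lmin, min (c + 1) g)
     in if length Lmin < N \<and> length Lmax < N then
          (if Lmin = [] \<and> Lmax = [] then None
           else if Lmax \<noteq> [] \<and> (prev = Some lmin \<or> Lmin = []) then takeMax
           else takeMin)
        else if length Lmax < N then takeMin
        else if length Lmin < N then takeMax
        else if c = g then takeMax else takeMin)"

definition pending ::
  "nat set \<Rightarrow> (nat \<Rightarrow> real) \<Rightarrow> (nat \<Rightarrow> nat \<Rightarrow> (real \<times> act) option) \<Rightarrow> real \<Rightarrow> nat set" where
  "pending Inj arr run t =
     {\<tau> \<in> Inj. arr \<tau> \<le> t \<and> \<not> (\<exists>p k t'. run p k = Some (t', Report \<tau>) \<and> t' \<le> t)}"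

definition Lmin_at where
  "Lmin_at lmin Inj arr cst run t =
     sorted_by_arrival arr {\<tau> \<in> pending Inj arr run t. cst \<tau> = lmin}"

definition Lmax_at where
  "Lmax_at lmax Inj arr cst run t =
     sorted_by_arrival arr {\<tau> \<in> pending Inj arr run t. cst \<tau> = lmax}"

definition choice_at where
  "choice_at n lmin lmax s Inj arr cst run p prev c t =
     burst_choice n lmin lmax s p prev c
       (Lmin_at lmin Inj arr cst run t) (Lmax_at lmax Inj arr cst run t)"

text \<open>Local state (prev, c) of processor p before its step k.\<close>
primrec lstate ::
  "nat \<Rightarrow> real \<Rightarrow> real \<Rightarrow> real \<Rightarrow> nat set \<Rightarrow> (nat \<Rightarrow> real) \<Rightarrow> (nat \<Rightarrow> real)
   \<Rightarrow> (nat \<Rightarrow> nat \<Rightarrow> (real \<times> act) option) \<Rightarrow> nat \<Rightarrow> nat \<Rightarrow> real option \<times> int" where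
  "lstate n lmin lmax s Inj arr cst run p 0 = (None, 0)"
| "lstate n lmin lmax s Inj arr cst run p (Suc k) =
     (case run p k of
        None \<Rightarrow> (None, 0)
      | Some (t, a) \<Rightarrow>
          (case a of
             Restart \<Rightarrow> (None, 0)
           | Crash \<Rightarrow> (None, 0)
           | Sched \<tau> \<Rightarrow>
               (let (prev, c) = lstate n lmin lmax s Inj arr cst run p k in
                  (Some (cst \<tau>),
                   (case choice_at n lmin lmax s Inj arr cst run p prev c t of
                      Some (_, c') \<Rightarrow> c'
                    | None \<Rightarrow> c)))
           | _ \<Rightarrow> lstate n lmin lmax s Inj arr cst run p k))"

definition burst_exec ::
  "nat \<Rightarrow> real \<Rightarrow> real \<Rightarrow> real \<Rightarrow> nat set \<Rightarrow> (nat \<Rightarrow> real) \<Rightarrow> (nat \<Rightarrow> real)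
   \<Rightarrow> (nat \<Rightarrow> nat \<Rightarrow> (real \<times> act) option) \<Rightarrow> bool" where
  "burst_exec n lmin lmax s Inj arr cst run \<longleftrightarrow>
     (\<forall>\<tau>\<in>Inj. cst \<tau> = lmin \<or> cst \<tau> = lmax) \<and>
     (\<forall>t. finite {\<tau> \<in> Inj. arr \<tau> \<le> t}) \<and>
     (\<forall>p k. p \<notin> {1..n} \<longrightarrow> run p k = None) \<and>
     (\<forall>p k. run p (Suc k) \<noteq> None \<longrightarrow> run p k \<noteq> None) \<and>
     (\<forall>p k t a t' a'. run p k = Some (t, a) \<longrightarrow> run p (Suc k) = Some (t', a') \<longrightarrow> t \<le> t') \<and>
     (\<forall>p t a. run p 0 = Some (t, a) \<longrightarrow> a = Restart) \<and>
     (\<forall>p k t a. run p (Suc k) = Some (t, a) \<longrightarrow>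
        (\<exists>t0 a0. run p k = Some (t0, a0) \<and>
          (case a of
             Restart \<Rightarrow> a0 = Crash
           | Crash \<Rightarrow> a0 \<noteq> Crash \<and> (\<forall>\<tau>. a0 = Sched \<tau> \<longrightarrow> t < t0 + cst \<tau> / s)
           | Report \<tau> \<Rightarrow> a0 = Sched \<tau> \<and> t = t0 + cst \<tau> / s
           | Sched \<tau> \<Rightarrow> (a0 = Restart \<or> a0 = Poll \<or> (\<exists>\<sigma>. a0 = Report \<sigma>)) \<and>
                (let (prev, c) = lstate n lmin lmax s Inj arr cst run p (Suc k) in
                   \<exists>c'. choice_at n lmin lmax s Inj arr cst run p prev c t = Some (\<tau>, c'))
           | Poll \<Rightarrow> (a0 = Restart \<or> a0 = Poll \<or> (\<exists>\<sigma>. a0 = Report \<sigma>)) \<and>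
                (let (prev, c) = lstate n lmin lmax s Inj arr cst run p (Suc k) in
                   choice_at n lmin lmax s Inj arr cst run p prev c t = None))))"

text \<open>Absolute task execution of \<tau> by processor p, over the interval [t, t']:
  p schedules \<tau> at t (step k) and its very next step is reporting \<tau> at t'
  (so p does not stop/crash in between).\<close>
definition abs_exec ::
  "(nat \<Rightarrow> nat \<Rightarrow> (real \<times> act) option) \<Rightarrow> nat \<Rightarrow> nat \<Rightarrow> nat \<Rightarrow> real \<Rightarrow> real \<Rightarrow> bool" where
  "abs_exec run p k \<tau> t t' \<longleftrightarrow>
     run p k = Some (t, Sched \<tau>) \<and> run p (Suc k) = Some (t', Report \<tau>)"

end

theory Submission imports Defs begin

definition Rarr :: "(nat \<Rightarrow> real) \<Rightarrow> nat \<Rightarrow> nat \<Rightarrow> bool" where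
 "Rarr arr x y \<longleftrightarrow> arr x < arr y \<or> (arr x = arr y \<and> x < y)"

lemma Rarr_irr: "\<not> Rarr arr x x" by (auto simp: Rarr_def)
lemma Rarr_asym: "Rarr arr x y \<Longrightarrow> \<not> Rarr arr y x" by (auto simp: Rarr_def)
lemma Rarr_total: "x \<noteq> y \<Longrightarrow> \<not> Rarr arr y x \<Longrightarrow> Rarr arr x y" by (auto simp: Rarr_def)

lemma Rarr_min:
  assumes "finite S" "S \<noteq> {}"
  shows "\<exists>m\<in>S. \<forall>y\<in>S. \<not> Rarr arr y m"
proof -
  define a where "a = Min (arr ` S)"
  have aS: "a \<in> arr ` S" using assms unfolding a_def by simp
  define T where "T = {x\<in>S. arr x = a}"
  have T: "finite T" "T \<noteq> {}" using assms aS by (auto simp: T_def)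
  define m where "m = Min T"
  have mT: "m \<in> T" using T unfolding m_def by simp
  have "\<forall>y\<in>S. \<not> Rarr arr y m"
  proof
    fix y assume y: "y \<in> S"
    have "a \<le> arr y" using assms y unfolding a_def by simp
    moreover have "arr y = a \<Longrightarrow> m \<le> y" using T y unfolding m_def T_def by simp
    ultimately show "\<not> Rarr arr y m" using mT by (auto simp: Rarr_def T_def)
  qed
  then show ?thesis using mT T_def by auto
qed

lemma sorted_ex:
  assumes "finite S"
  shows "\<exists>xs. set xs = S \<and> sorted_wrt (Rarr arr) xs"
  using assms
proof (induction "card S" arbitrary: S)
  case 0
  then have "S = {}" by simp
  then show ?case by (intro exI[of _ "[]"]) simp
next
  case (Suc c)
  then have ne: "S \<noteq> {}" by auto
  obtain m where m: "m \<in> S" "\<forall>y\<in>S. \<not> Rarr arr y m" using Rarr_min[OF Suc.prems ne] by blast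
  have fS: "finite (S - {m})" using Suc.prems by simp
  have "card (S - {m}) = card S - 1" using m(1) Suc.prems by (simp add: card_Diff_singleton)
  then have "c = card (S - {m})" using Suc.hyps(2) by simp
  then obtain xs where xs: "set xs = S - {m}" "sorted_wrt (Rarr arr) xs"
    using Suc.hyps(1)[OF _ fS] by blast
  have "\<forall>y\<in>set xs. Rarr arr m y"
  proof
    fix y assume "y \<in> set xs"
    then have "y \<in> S" "y \<noteq> m" using xs(1) by auto
    then show "Rarr arr m y" using m(2) Rarr_total[of m y arr] by auto
  qed
  then have "sorted_wrt (Rarr arr) (m # xs)" using xs(2) by simp
  moreover have "set (m # xs) = S" using xs m by auto
  ultimately show ?case by blast
qed

lemma sorted_uniq:
  "set xs = set ys \<Longrightarrow> sorted_wrt (Rarr arr) xs \<Longrightarrow> sorted_wrt (Rarr arr) ys \<Longrightarrow> xs = ys"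
proof (induction xs arbitrary: ys)
  case Nil then show ?case by simp
next
  case (Cons x xs)
  have "ys \<noteq> []" using Cons.prems(1) by auto
  then obtain y ys' where ys: "ys = y # ys'" by (cases ys) auto
  have sx: "\<forall>z\<in>set xs. Rarr arr x z" using Cons.prems(2) by simp
  have sy: "\<forall>z\<in>set ys'. Rarr arr y z" using Cons.prems(3) ys by simp
  have xy: "x = y"
  proof (rule ccontr)
    assume ne: "x \<noteq> y"
    have "y \<in> set (x # xs)" using Cons.prems(1) ys by simp
    then have "y \<in> set xs" using ne by simp
    then have a: "Rarr arr x y" using sx by blast
    have "x \<in> set (y # ys')" using Cons.prems(1) ys by (metis list.set_intros(1))
    then have "x \<in> set ys'" using ne by simp
    then have "Rarr arr y x" using sy by blast
    then show False using a Rarr_asym by blast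
  qed
  have nx: "x \<notin> set xs" using sx Rarr_irr by blast
  have ny: "y \<notin> set ys'" using sy Rarr_irr by blast
  have "set xs = set (x # xs) - {x}" using nx by simp
  also have "\<dots> = set (y # ys') - {y}" using Cons.prems(1) ys xy by simp
  also have "\<dots> = set ys'" using ny by simp
  finally have e: "set xs = set ys'" .
  have "sorted_wrt (Rarr arr) xs" using Cons.prems(2) by simp
  moreover have "sorted_wrt (Rarr arr) ys'" using Cons.prems(3) ys by simp
  ultimately have "xs = ys'" using Cons.IH e by blast
  then show ?case using ys xy by simp
qed

lemma sba:
  assumes "finite S"
  shows "set (sorted_by_arrival arr S) = S \<and> sorted_wrt (Rarr arr) (sorted_by_arrival arr S)"
proof -
  obtain xs where xs: "set xs = S" "sorted_wrt (Rarr arr) xs" using sorted_ex[OF assms] by blast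
  have "sorted_by_arrival arr S = xs"
    unfolding sorted_by_arrival_def Rarr_def[symmetric]
  proof (rule the_equality)
    show "set xs = S \<and> sorted_wrt (Rarr arr) xs" using xs by simp
    fix ys assume "set ys = S \<and> sorted_wrt (Rarr arr) ys"
    then show "ys = xs" using sorted_uniq[of ys xs arr] xs by simp
  qed
  then show ?thesis using xs by simp
qed

lemma idx_card:
  assumes "sorted_wrt (Rarr arr) xs" "i < length xs" "xs ! i = \<tau>"
  shows "card {\<sigma> \<in> set xs. Rarr arr \<sigma> \<tau>} = i"
proof -
  have irr: "\<not> Rarr arr x x" for x by (auto simp: Rarr_def)
  have asy: "\<not> (Rarr arr x y \<and> Rarr arr y x)" for x y by (auto simp: Rarr_def)
  have d: "distinct xs" using assms(1) irr
    by (metis distinct_conv_nth sorted_wrt_nth_less nat_neq_iff)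
  have "{\<sigma> \<in> set xs. Rarr arr \<sigma> \<tau>} = set (take i xs)"
  proof
    show "set (take i xs) \<subseteq> {\<sigma> \<in> set xs. Rarr arr \<sigma> \<tau>}"
    proof
      fix x assume "x \<in> set (take i xs)"
      then obtain j where "j < i" "x = xs ! j" using assms(2)
        by (auto simp: in_set_conv_nth)
      then show "x \<in> {\<sigma> \<in> set xs. Rarr arr \<sigma> \<tau>}"
        using assms sorted_wrt_nth_less[OF assms(1)] by auto
    qed
    show "{\<sigma> \<in> set xs. Rarr arr \<sigma> \<tau>} \<subseteq> set (take i xs)"
    proof
      fix x assume x: "x \<in> {\<sigma> \<in> set xs. Rarr arr \<sigma> \<tau>}"
      then obtain j where j: "j < length xs" "x = xs ! j" by (auto simp: in_set_conv_nth)
      have "j < i"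
      proof (rule ccontr)
        assume "\<not> j < i"
        then consider "j = i" | "i < j" by linarith
        then show False
        proof cases
          case 1 then show ?thesis using x j assms irr by auto
        next
          case 2 then have "Rarr arr \<tau> x" using sorted_wrt_nth_less[OF assms(1) 2 j(1)] assms j by simp
          then show ?thesis using x asy by auto
        qed
      qed
      then show "x \<in> set (take i xs)" using j by (auto simp: in_set_conv_nth)
    qed
  qed
  then show ?thesis using d assms(2) by (simp add: distinct_card)
qed


lemma sorted_Rarr_distinct: "sorted_wrt (Rarr arr) xs \<Longrightarrow> distinct xs"
  by (metis distinct_conv_nth sorted_wrt_nth_less nat_neq_iff Rarr_def less_irrefl)

lemma choice_max:
  assumes "length Lmax \<ge> n^2" "burst_choice n lmin lmax s p prev c Lmin Lmax = Some (x, c')"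
  shows "x = pick (p*n) Lmax \<or> (x = pick (p*n) Lmin \<and> length Lmin \<ge> n^2)"
  using assms unfolding burst_choice_def Let_def by (auto split: if_splits)

lemma be_step:
  assumes "burst_exec n lmin lmax s Inj arr cst run" "run p (Suc k) = Some (t, a)"
  shows "\<exists>t0 a0. run p k = Some (t0, a0) \<and>
          (case a of
             Restart \<Rightarrow> a0 = Crash
           | Crash \<Rightarrow> a0 \<noteq> Crash \<and> (\<forall>\<tau>. a0 = Sched \<tau> \<longrightarrow> t < t0 + cst \<tau> / s)
           | Report \<tau> \<Rightarrow> a0 = Sched \<tau> \<and> t = t0 + cst \<tau> / s
           | Sched \<tau> \<Rightarrow> (a0 = Restart \<or> a0 = Poll \<or> (\<exists>\<sigma>. a0 = Report \<sigma>)) \<and>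
                (let (prev, c) = lstate n lmin lmax s Inj arr cst run p (Suc k) in
                   \<exists>c'. choice_at n lmin lmax s Inj arr cst run p prev c t = Some (\<tau>, c'))
           | Poll \<Rightarrow> (a0 = Restart \<or> a0 = Poll \<or> (\<exists>\<sigma>. a0 = Report \<sigma>)) \<and>
                (let (prev, c) = lstate n lmin lmax s Inj arr cst run p (Suc k) in
                   choice_at n lmin lmax s Inj arr cst run p prev c t = None))"
proof -
  have "\<forall>p k t a. run p (Suc k) = Some (t, a) \<longrightarrow>
        (\<exists>t0 a0. run p k = Some (t0, a0) \<and>
          (case a of
             Restart \<Rightarrow> a0 = Crash
           | Crash \<Rightarrow> a0 \<noteq> Crash \<and> (\<forall>\<tau>. a0 = Sched \<tau> \<longrightarrow> t < t0 + cst \<tau> / s)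
           | Report \<tau> \<Rightarrow> a0 = Sched \<tau> \<and> t = t0 + cst \<tau> / s
           | Sched \<tau> \<Rightarrow> (a0 = Restart \<or> a0 = Poll \<or> (\<exists>\<sigma>. a0 = Report \<sigma>)) \<and>
                (let (prev, c) = lstate n lmin lmax s Inj arr cst run p (Suc k) in
                   \<exists>c'. choice_at n lmin lmax s Inj arr cst run p prev c t = Some (\<tau>, c'))
           | Poll \<Rightarrow> (a0 = Restart \<or> a0 = Poll \<or> (\<exists>\<sigma>. a0 = Report \<sigma>)) \<and>
                (let (prev, c) = lstate n lmin lmax s Inj arr cst run p (Suc k) in
                   choice_at n lmin lmax s Inj arr cst run p prev c t = None)))"
    using assms(1) unfolding burst_exec_def by (elim conjE)
  then show ?thesis using assms(2) by blast
qed

lemma be_report: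
  assumes "burst_exec n lmin lmax s Inj arr cst run" "run p (Suc k) = Some (t, Report \<tau>)"
  shows "\<exists>t0. run p k = Some (t0, Sched \<tau>) \<and> t = t0 + cst \<tau> / s"
proof -
  obtain t0 a0 where "run p k = Some (t0, a0)" "a0 = Sched \<tau> \<and> t = t0 + cst \<tau> / s"
    using be_step[OF assms] by auto
  then show ?thesis by blast
qed
lemma be_mono:
  assumes "burst_exec n lmin lmax s Inj arr cst run" "k \<le> k'" "run p k' = Some (t', a')"
  shows "\<exists>t a. run p k = Some (t, a) \<and> t \<le> t'"
  using assms(2,3)
proof (induction k' arbitrary: t' a')
  case 0 then show ?case by auto
next
  case (Suc m)
  show ?case
  proof (cases "k = Suc m")
    case True then show ?thesis using Suc by auto
  next
    case False
    then have km: "k \<le> m" using Suc by auto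
    have "run p m \<noteq> None" using assms(1) Suc.prems unfolding burst_exec_def by blast
    then obtain t0 a0 where r: "run p m = Some (t0, a0)" by auto
    have "t0 \<le> t'" using assms(1) r Suc.prems unfolding burst_exec_def by blast
    with Suc.IH[OF km r] show ?thesis by auto
  qed
qed

lemma be_proc:
  assumes "burst_exec n lmin lmax s Inj arr cst run" "run p k = Some x"
  shows "p \<in> {1..n}"
  using assms unfolding burst_exec_def by auto

lemma be_sched:
  assumes "burst_exec n lmin lmax s Inj arr cst run" "run p k = Some (t, Sched \<tau>)"
  shows "\<exists>k0 prev c c'. k = Suc k0 \<and> lstate n lmin lmax s Inj arr cst run p k = (prev, c)
     \<and> choice_at n lmin lmax s Inj arr cst run p prev c t = Some (\<tau>, c')"
proof (cases k)
  case 0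
  have "\<forall>p t a. run p 0 = Some (t, a) \<longrightarrow> a = Restart" using assms(1) unfolding burst_exec_def by (elim conjE)
  then have "Sched \<tau> = Restart" using assms(2) 0 by blast
  then show ?thesis by simp
next
  case (Suc k0)
  obtain prev c where ps: "lstate n lmin lmax s Inj arr cst run p k = (prev, c)"
    by (cases "lstate n lmin lmax s Inj arr cst run p k") auto
  obtain t0 a0 where "run p k0 = Some (t0, a0)"
    "let (prev, c) = lstate n lmin lmax s Inj arr cst run p (Suc k0) in
        \<exists>c'. choice_at n lmin lmax s Inj arr cst run p prev c t = Some (\<tau>, c')"
    using be_step[OF assms(1) assms(2)[unfolded Suc]] by auto
  then have "\<exists>c'. choice_at n lmin lmax s Inj arr cst run p prev c t = Some (\<tau>, c')"
    using ps Suc by simp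
  then show ?thesis using ps Suc by blast
qed
lemma fin_pending:
  assumes "burst_exec n lmin lmax s Inj arr cst run"
  shows "finite (pending Inj arr run t)"
proof -
  have "finite {\<tau> \<in> Inj. arr \<tau> \<le> t}" using assms unfolding burst_exec_def by blast
  then show ?thesis by (rule finite_subset[rotated]) (auto simp: pending_def)
qed

lemma sched_in_I:
  assumes be: "burst_exec n lmin lmax s Inj arr cst run" and n: "n \<ge> 1" and l: "lmin < lmax"
    and r: "run p k = Some (t, Sched \<tau>)" and c: "cst \<tau> = lmax"
    and card: "card {\<sigma> \<in> pending Inj arr run t. cst \<sigma> = lmax} \<ge> n^2"
  shows "\<tau> \<in> pending Inj arr run t \<and> card {\<sigma> \<in> pending Inj arr run t. cst \<sigma> = lmax \<and> Rarr arr \<sigma> \<tau>} = p*n - 1"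
proof -
  define Mx where "Mx = {\<sigma> \<in> pending Inj arr run t. cst \<sigma> = lmax}"
  define Mn where "Mn = {\<sigma> \<in> pending Inj arr run t. cst \<sigma> = lmin}"
  have fp: "finite (pending Inj arr run t)" by (rule fin_pending[OF be])
  have fx: "finite Mx" and fn: "finite Mn" using fp by (auto simp: Mx_def Mn_def)
  define LX where "LX = Lmax_at lmax Inj arr cst run t"
  define LN where "LN = Lmin_at lmin Inj arr cst run t"
  have LX: "set LX = Mx \<and> sorted_wrt (Rarr arr) LX" unfolding LX_def Lmax_at_def Mx_def
    using sba fx Mx_def by blast
  have LN: "set LN = Mn" unfolding LN_def Lmin_at_def Mn_def
    using sba fn Mn_def by blast
  have lenX: "length LX = card Mx" using LX sorted_Rarr_distinct distinct_card by metis
  have lenN: "length LN \<ge> card Mn" using LN card_length by metis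
  obtain k0 prev c c' where ch: "choice_at n lmin lmax s Inj arr cst run p prev c t = Some (\<tau>, c')"
    using be_sched[OF be r] by blast
  have ch': "burst_choice n lmin lmax s p prev c LN LX = Some (\<tau>, c')"
    using ch unfolding choice_at_def LN_def LX_def .
  have p: "p \<in> {1..n}" using be_proc[OF be r] .
  have ge: "length LX \<ge> n^2" using lenX card Mx_def by simp
  have n2: "n^2 \<ge> 1" using n by simp
  have pn: "p*n \<le> n^2" "p * n \<ge> 1" using p n by (auto simp: power2_eq_square)
  have ix: "(p*n - 1) mod length LX = p*n - 1"
    by (rule mod_less) (use pn ge in linarith)
  have "\<tau> = pick (p*n) LX"
  proof -
    { assume a: "\<tau> = pick (p*n) LN" "length LN \<ge> n^2"
      then have "LN \<noteq> []" using n2 by auto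
      then have "\<tau> \<in> set LN" using a(1) by (simp add: pick_def)
      then have "cst \<tau> = lmin" using LN Mn_def by auto
      then have False using c l by simp }
    then show ?thesis using choice_max[OF ge ch'] by blast
  qed
  then have tx: "\<tau> = LX ! (p*n - 1)" using ix by (simp add: pick_def)
  have lt: "p*n - 1 < length LX" using pn ge by linarith
  have "\<tau> \<in> set LX" using tx lt by simp
  then have "\<tau> \<in> pending Inj arr run t" using LX Mx_def by auto
  moreover have "card {\<sigma> \<in> set LX. Rarr arr \<sigma> \<tau>} = p*n - 1"
    using idx_card[of arr LX "p*n-1" \<tau>] LX lt tx by simp
  moreover have "{\<sigma> \<in> set LX. Rarr arr \<sigma> \<tau>} = {\<sigma> \<in> pending Inj arr run t. cst \<sigma> = lmax \<and> Rarr arr \<sigma> \<tau>}"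
    using LX Mx_def by auto
  ultimately show ?thesis by simp
qed


lemma one_report:
  assumes be: "burst_exec n lmin lmax s Inj arr cst run"
    and a: "run q k = Some (ta, Report \<sigma>)" and b: "run q k' = Some (tb, Report \<sigma>')"
    and kk: "k < k'" and c: "cst \<sigma>' = lmax"
  shows "tb \<ge> ta + lmax / s"
proof -
  obtain m where m: "k' = Suc m" using kk by (cases k') auto
  obtain tm where tm: "run q m = Some (tm, Sched \<sigma>')" "tb = tm + cst \<sigma>' / s"
    using be_report[OF be b[unfolded m]] by blast
  obtain tx ax where "run q k = Some (tx, ax)" "tx \<le> tm"
  proof -
    have "k \<le> m" using kk m by simp
    then show ?thesis using be_mono[OF be _ tm(1)] that by blast
  qed
  then have "ta \<le> tm" using a by simp
  then show ?thesis using tm c by simp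
qed

lemma main_ord:
  assumes n: "n \<ge> 1" and "0 < lmin" and l: "lmin < lmax" and s: "1 < s"
    and be: "burst_exec n lmin lmax s Inj arr cst run"
    and I: "\<forall>t\<in>I. card {\<sigma> \<in> pending Inj arr run t. cst \<sigma> = lmax} \<ge> n^2"
    and c: "cst \<tau> = lmax"
    and e1: "abs_exec run p1 k1 \<tau> t1 t1'" and i1: "{t1..t1'} \<subseteq> I"
    and e2: "abs_exec run p2 k2 \<tau> t2 t2'" and i2: "{t2..t2'} \<subseteq> I"
    and le: "t1 \<le> t2"
  shows "p1 = p2 \<and> k1 = k2"
proof -
  have r1: "run p1 k1 = Some (t1, Sched \<tau>)" "run p1 (Suc k1) = Some (t1', Report \<tau>)"
    using e1 by (auto simp: abs_exec_def)
  have r2: "run p2 k2 = Some (t2, Sched \<tau>)" "run p2 (Suc k2) = Some (t2', Report \<tau>)"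
    using e2 by (auto simp: abs_exec_def)
  have lp: "lmax / s > 0" using l s \<open>0 < lmin\<close> by simp
  have t1': "t1' = t1 + lmax / s" using be_report[OF be r1(2)] r1(1) c by auto
  have t2': "t2' = t2 + lmax / s" using be_report[OF be r2(2)] r2(1) c by auto
  have t1I: "t1 \<in> I" using i1 t1' lp by auto
  have t2I: "t2 \<in> I" using i2 t2' lp by auto
  define B where "B t = {\<sigma> \<in> pending Inj arr run t. cst \<sigma> = lmax \<and> Rarr arr \<sigma> \<tau>}" for t
  have s1: "\<tau> \<in> pending Inj arr run t1" "card (B t1) = p1*n - 1"
    using sched_in_I[OF be n l r1(1) c] I t1I by (auto simp: B_def)
  have s2: "\<tau> \<in> pending Inj arr run t2" "card (B t2) = p2*n - 1"
    using sched_in_I[OF be n l r2(1) c] I t2I by (auto simp: B_def)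
  have lt: "t2 < t1'"
  proof (rule ccontr)
    assume "\<not> t2 < t1'"
    then have "t1' \<le> t2" by simp
    then show False using s2(1) r1(2) by (auto simp: pending_def)
  qed
  have arr1: "arr \<tau> \<le> t1" using s1(1) by (simp add: pending_def)
  have sub: "B t2 \<subseteq> B t1"
  proof
    fix \<sigma> assume "\<sigma> \<in> B t2"
    moreover then have "arr \<sigma> \<le> arr \<tau>" by (auto simp: B_def Rarr_def)
    ultimately show "\<sigma> \<in> B t1" using arr1 le by (force simp: B_def pending_def)
  qed
  have fB: "finite (B t1)" using fin_pending[OF be] by (simp add: B_def)
  define E where "E = B t1 - B t2"
  have Erep: "\<exists>q k t'. run q k = Some (t', Report \<sigma>) \<and> t1 < t' \<and> t' \<le> t2" if "\<sigma> \<in> E" for \<sigma>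
  proof -
    have a: "\<sigma> \<in> Inj" "arr \<sigma> \<le> t2" "\<not> (\<exists>p k t'. run p k = Some (t', Report \<sigma>) \<and> t' \<le> t1)"
      "cst \<sigma> = lmax" "Rarr arr \<sigma> \<tau>"
      using that le by (auto simp: E_def B_def pending_def)
    then have "\<sigma> \<notin> pending Inj arr run t2" using that by (auto simp: E_def B_def)
    then obtain q k t' where "run q k = Some (t', Report \<sigma>)" "t' \<le> t2"
      using a by (auto simp: pending_def)
    moreover then have "t1 < t'" using a(3) by force
    ultimately show ?thesis by blast
  qed
  have Ecst: "cst \<sigma> = lmax" if "\<sigma> \<in> E" for \<sigma> using that by (simp add: E_def B_def)
  define f where "f \<sigma> = (SOME q. \<exists>k t'. run q k = Some (t', Report \<sigma>) \<and> t1 < t' \<and> t' \<le> t2)" for \<sigma>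
  have fprop: "\<exists>k t'. run (f \<sigma>) k = Some (t', Report \<sigma>) \<and> t1 < t' \<and> t' \<le> t2" if "\<sigma> \<in> E" for \<sigma>
    unfolding f_def using Erep[OF that] by (rule someI_ex)
  have inj: "inj_on f E"
  proof (rule inj_onI)
    fix x y assume x: "x \<in> E" and y: "y \<in> E" and fxy: "f x = f y"
    obtain kx tx where kx: "run (f x) kx = Some (tx, Report x)" "t1 < tx" "tx \<le> t2" using fprop[OF x] by blast
    obtain ky ty where ky: "run (f x) ky = Some (ty, Report y)" "t1 < ty" "ty \<le> t2" using fprop[OF y] fxy by auto
    consider "kx = ky" | "kx < ky" | "ky < kx" by linarith
    then show "x = y"
    proof cases
      case 1 then show ?thesis using kx ky by simp
    next
      case 2 then have "ty \<ge> tx + lmax / s" using one_report[OF be kx(1) ky(1) _ Ecst[OF y]] by simp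
      then show ?thesis using kx ky lt t1' by simp
    next
      case 3 then have "tx \<ge> ty + lmax / s" using one_report[OF be ky(1) kx(1) _ Ecst[OF x]] by simp
      then show ?thesis using kx ky lt t1' by simp
    qed
  qed
  have img: "f ` E \<subseteq> {1..n} - {p1}"
  proof
    fix q assume "q \<in> f ` E"
    then obtain \<sigma> where \<sigma>: "\<sigma> \<in> E" "q = f \<sigma>" by auto
    obtain k t' where kt: "run q k = Some (t', Report \<sigma>)" "t1 < t'" "t' \<le> t2" using fprop[OF \<sigma>(1)] \<sigma>(2) by blast
    have "q \<in> {1..n}" using be_proc[OF be kt(1)] .
    moreover have "q \<noteq> p1"
    proof
      assume qp: "q = p1"
      consider "k \<le> k1" | "k = Suc k1" | "Suc k1 < k" by linarith
      then show False
      proof cases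
        case 1
        obtain ta aa where "run p1 k = Some (ta, aa)" "ta \<le> t1" using be_mono[OF be 1 r1(1)] by blast
        then show False using kt qp by simp
      next
        case 2 then show False using kt qp r1(2) lt by simp
      next
        case 3
        obtain ta aa where "run p1 (Suc k1) = Some (ta, aa)" "ta \<le> t'"
          using be_mono[OF be less_imp_le[OF 3] kt(1)[unfolded qp]] by blast
        then show False using kt qp r1(2) lt by simp
      qed
    qed
    ultimately show "q \<in> {1..n} - {p1}" by simp
  qed
  have p1n: "p1 \<in> {1..n}" using be_proc[OF be r1(1)] .
  have p2n: "p2 \<in> {1..n}" using be_proc[OF be r2(1)] .
  have "card E \<le> card ({1..n} - {p1})" by (rule card_inj_on_le[OF inj img]) simp
  also have "\<dots> = n - 1" using p1n by simp
  finally have cE: "card E \<le> n - 1" .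
  have "card (B t1) = card (B t2) + card E"
    unfolding E_def using sub fB by (metis card_Diff_subset finite_subset le_add_diff_inverse card_mono)
  then have A: "p1*n - 1 \<le> p2*n - 1 + (n - 1)" and Bq: "p2*n - 1 \<le> p1*n - 1"
    using s1 s2 cE by auto
  have pos1: "p1*n \<ge> 1" "p2*n \<ge> 1" using p1n p2n n by auto
  have "p1*n < p2*n + n" using A pos1 n by linarith
  also have "\<dots> = (p2+1)*n" by simp
  finally have "p1*n < (p2+1)*n" .
  then have "p1 < p2 + 1" by (metis mult_less_cancel2)
  moreover have "p2*n \<le> p1*n" using Bq pos1 by linarith
  then have "p2 \<le> p1" using n by simp
  ultimately have pp: "p1 = p2" by simp
  have "k1 = k2"
  proof (rule ccontr)
    assume "k1 \<noteq> k2"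
    then consider "Suc k1 \<le> k2" | "Suc k2 \<le> k1" by linarith
    then show False
    proof cases
      case 1
      obtain ta aa where "run p1 (Suc k1) = Some (ta, aa)" "ta \<le> t2"
        using be_mono[OF be 1 r2(1)[folded pp]] by blast
      then show False using r1(2) lt by simp
    next
      case 2
      obtain ta aa where "run p2 (Suc k2) = Some (ta, aa)" "ta \<le> t1"
        using be_mono[OF be 2 r1(1)[unfolded pp]] by blast
      then show False using r2(2) t2' lp le by simp
    qed
  qed
  then show ?thesis using pp by simp
qed

theorem lemma11:
  fixes n :: nat and lmin lmax s :: real and Inj :: "nat set"
    and arr cst :: "nat \<Rightarrow> real" and run :: "nat \<Rightarrow> nat \<Rightarrow> (real \<times> act) option"
    and I :: "real set" and \<tau> p1 k1 p2 k2 :: nat and t1 t1' t2 t2' :: real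
  assumes "n \<ge> 1" and "0 < lmin" and "lmin < lmax" and "1 < s"
    and "burst_exec n lmin lmax s Inj arr cst run"
    and "\<forall>x\<in>I. \<forall>z\<in>I. {x..z} \<subseteq> I"
    and "\<forall>t\<in>I. card {\<sigma> \<in> pending Inj arr run t. cst \<sigma> = lmax} \<ge> n^2"
    and "\<tau> \<in> Inj" and "cst \<tau> = lmax"
    and "abs_exec run p1 k1 \<tau> t1 t1'" and "{t1..t1'} \<subseteq> I"
    and "abs_exec run p2 k2 \<tau> t2 t2'" and "{t2..t2'} \<subseteq> I"
  shows "p1 = p2 \<and> k1 = k2"
proof (cases "t1 \<le> t2")
  case True
  then show ?thesis using main_ord[OF assms(1-5,7,9-13)] by blast
next
  case False
  then have "t2 \<le> t1" by simp
  then show ?thesis using main_ord[OF assms(1-5,7,9,12,13,10,11)] by auto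
qed

end
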